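(* Let $(X,d)$ be a compact metric space with $\operatorname{diam}(X,d)=1/2$, with hyperbolic filling $\mathcal S$ whose parameters satisfy $a\ge\lambda\ge2$ and $\lambda\ge1+\frac{a}{a-1}$. Let $x,y\in X$ and let $(z,m),(w,n)\in\mathcal S$ with $x\in B(z,a^{-m})$, $y\in B(w,a^{-n})$ and $a^{-m}+a^{-n}<a^{-2}d(x,y)$. Then every $u\in c(x,y)$ is a $K$-approximate center, with $K=80$, of every geodesic triangle $[v_0,(z,m),(w,n)]$ in $(\tilde{\mathcal S},D_1)$.
   Context: Hyperbolic filling: $X_0\subset X_1\subset\cdots$ increasing, each $X_n$ a maximal $a^{-n}$-separated subset of $X$; $X_0=\{x_0\}$. $\mathcal S_n=\{(x,n):x\in X_n\}$, $\mathcal S=\bigcup_n\mathcal S_n$, $v_0=(x_0,0)$. $D_1$ is the graph distance on $\mathcal S$ for the graph where distinct $(x,n),(y,m)$ are adjacent iff either $n=m$ and $B(x,\lambda a^{-n})\cap B(y,\lambda a^{-n})\ne\emptyset$, or $|n-m|=1$ and $B(x,a^{-n})\cap B(y,a^{-m})\ne\emptyset$. $(\tilde{\mathcal S},D_1)$ is the geodesic metric space obtained from this graph by replacing each edge with an isometric copy of $[0,1]$ (so $\mathcal S\subset\tilde{\mathcal S}$ and $D_1$ extends the graph distance). A geodesic triangle $[p,q,r]$ is a union of geodesic segments $[p,q]\cup[q,r]\cup[r,p]$; a point $c$ is a $K$-approximate center of it if its distance to each of the three sides is at most $K$. For distinct $x,y\in X$, let $\tilde n$ be the largest integer such that $\{x,y\}\subset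 B(\tilde z,2a^{-\tilde n})$ for some $(\tilde z,\tilde n)\in\mathcal S$, and $c(x,y)=\{(\tilde z,\tilde n)\in\mathcal S:\{x,y\}\subset B(\tilde z,2a^{-\tilde n})\}$. *)

theory Defs
  imports "HOL-Analysis.Analysis"
begin

type_synonym 'a hvert = "'a \<times> nat"
type_synonym 'a mgpoint = "'a hvert \<times> 'a hvert \<times> real"

definition Bl :: "'a::metric_space set \<Rightarrow> 'a \<Rightarrow> real \<Rightarrow> 'a set" where
  "Bl X x r = {y \<in> X. dist x y < r}"

definition separated :: "real \<Rightarrow> 'a::metric_space set \<Rightarrow> bool" where
  "separated e A \<longleftrightarrow> (\<forall>p\<in>A. \<forall>q\<in>A. p \<noteq> q \<longrightarrow> e \<le> dist p q)"

definition maximal_separated :: "'a::metric_space set \<Rightarrow> real \<Rightarrow> 'a set \<Rightarrow> bool" where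
  "maximal_separated X e A \<longleftrightarrow> A \<subseteq> X \<and> separated e A \<and>
     (\<forall>B. A \<subseteq> B \<and> B \<subseteq> X \<and> separated e B \<longrightarrow> B = A)"

definition filling_seq :: "'a::metric_space set \<Rightarrow> real \<Rightarrow> (nat \<Rightarrow> 'a set) \<Rightarrow> 'a \<Rightarrow> bool" where
  "filling_seq X a Xs x0 \<longleftrightarrow> Xs 0 = {x0} \<and> (\<forall>n. Xs n \<subseteq> Xs (Suc n)) \<and>
     (\<forall>n. maximal_separated X (1 / a ^ n) (Xs n))"

definition hfS :: "(nat \<Rightarrow> 'a set) \<Rightarrow> 'a hvert set" where
  "hfS Xs = {(x, n). x \<in> Xs n}"

definition hf_adj :: "'a::metric_space set \<Rightarrow> real \<Rightarrow> real \<Rightarrow> (nat \<Rightarrow> 'a set) \<Rightarrow>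
    'a hvert \<Rightarrow> 'a hvert \<Rightarrow> bool" where
  "hf_adj X a lam Xs p q \<longleftrightarrow> p \<in> hfS Xs \<and> q \<in> hfS Xs \<and> p \<noteq> q \<and>
     ((snd p = snd q \<and> Bl X (fst p) (lam / a ^ snd p) \<inter> Bl X (fst q) (lam / a ^ snd q) \<noteq> {}) \<or>
      ((snd p = Suc (snd q) \<or> snd q = Suc (snd p)) \<and>
         Bl X (fst p) (1 / a ^ snd p) \<inter> Bl X (fst q) (1 / a ^ snd q) \<noteq> {}))"

definition hf_graph_dist :: "'a::metric_space set \<Rightarrow> real \<Rightarrow> real \<Rightarrow> (nat \<Rightarrow> 'a set) \<Rightarrow>
    'a hvert \<Rightarrow> 'a hvert \<Rightarrow> nat" where
  "hf_graph_dist X a lam Xs p q = (LEAST k. \<exists>ps. length ps = Suc k \<and> hd ps = p \<and> last ps = q \<and>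
     set ps \<subseteq> hfS Xs \<and> (\<forall>i<k. hf_adj X a lam Xs (ps ! i) (ps ! Suc i)))"

text \<open>Points of the metric graph: (u, v, t) is the point at distance t from u on the
  edge from u to v (t in [0,1]); a vertex u is represented by (u, u, 0).\<close>
definition mg_points :: "'a::metric_space set \<Rightarrow> real \<Rightarrow> real \<Rightarrow> (nat \<Rightarrow> 'a set) \<Rightarrow> 'a mgpoint set" where
  "mg_points X a lam Xs = {(u, v, t). u \<in> hfS Xs \<and>
      ((hf_adj X a lam Xs u v \<and> 0 \<le> t \<and> t \<le> 1) \<or> (v = u \<and> t = 0))}"

definition vtx :: "'a hvert \<Rightarrow> 'a mgpoint" where
  "vtx u = (u, u, 0)"

text \<open>The length metric D_1 of the metric graph (each edge an isometric copy of [0,1]).\<close>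
definition D1 :: "'a::metric_space set \<Rightarrow> real \<Rightarrow> real \<Rightarrow> (nat \<Rightarrow> 'a set) \<Rightarrow>
    'a mgpoint \<Rightarrow> 'a mgpoint \<Rightarrow> real" where
  "D1 X a lam Xs p q =
    (let (u1, v1, s) = p; (u2, v2, t) = q;
         G = (\<lambda>b c. real (hf_graph_dist X a lam Xs b c));
         via = Min {s + G u1 u2 + t, s + G u1 v2 + (1 - t),
                    (1 - s) + G v1 u2 + t, (1 - s) + G v1 v2 + (1 - t)}
     in if u1 \<noteq> v1 \<and> u1 = u2 \<and> v1 = v2 then min \<bar>s - t\<bar> via
        else if u1 \<noteq> v1 \<and> u1 = v2 \<and> v1 = u2 then min \<bar>s - (1 - t)\<bar> via
        else via)"

definition geodesic_seg :: "'a::metric_space set \<Rightarrow> real \<Rightarrow> real \<Rightarrow> (nat \<Rightarrow> 'a set) \<Rightarrow>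
    'a mgpoint \<Rightarrow> 'a mgpoint \<Rightarrow> 'a mgpoint set \<Rightarrow> bool" where
  "geodesic_seg X a lam Xs p q P \<longleftrightarrow> (\<exists>\<gamma> L. L = D1 X a lam Xs p q \<and> \<gamma> ` {0..L} = P \<and>
     \<gamma> 0 = p \<and> \<gamma> L = q \<and> (\<forall>s\<in>{0..L}. \<gamma> s \<in> mg_points X a lam Xs) \<and>
     (\<forall>s\<in>{0..L}. \<forall>t\<in>{0..L}. D1 X a lam Xs (\<gamma> s) (\<gamma> t) = \<bar>s - t\<bar>))"

definition approx_center :: "'a::metric_space set \<Rightarrow> real \<Rightarrow> real \<Rightarrow> (nat \<Rightarrow> 'a set) \<Rightarrow>
    real \<Rightarrow> 'a mgpoint \<Rightarrow> 'a mgpoint set \<Rightarrow> 'a mgpoint set \<Rightarrow> 'a mgpoint set \<Rightarrow> bool" where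
  "approx_center X a lam Xs K c P1 P2 P3 \<longleftrightarrow>
     (\<forall>P\<in>{P1, P2, P3}. (INF r\<in>P. D1 X a lam Xs c r) \<le> K)"

definition ctr_level :: "'a::metric_space set \<Rightarrow> real \<Rightarrow> (nat \<Rightarrow> 'a set) \<Rightarrow> 'a \<Rightarrow> 'a \<Rightarrow> nat" where
  "ctr_level X a Xs x y = (GREATEST n. \<exists>z\<in>Xs n. x \<in> Bl X z (2 / a ^ n) \<and> y \<in> Bl X z (2 / a ^ n))"

definition ctr :: "'a::metric_space set \<Rightarrow> real \<Rightarrow> (nat \<Rightarrow> 'a set) \<Rightarrow> 'a \<Rightarrow> 'a \<Rightarrow> 'a hvert set" where
  "ctr X a Xs x y = {(z, ctr_level X a Xs x y) | z. z \<in> Xs (ctr_level X a Xs x y) \<and>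
      x \<in> Bl X z (2 / a ^ ctr_level X a Xs x y) \<and> y \<in> Bl X z (2 / a ^ ctr_level X a Xs x y)}"

end

theory Submission
  imports Defs
begin

lemma geo_step: "(a::real) > 1 \<Longrightarrow> a/(a-1)/a^k - a/(a-1)/a^(Suc k) = 1/a^k"
proof -
  assume "a > 1"
  hence h: "a - 1 \<noteq> 0" "a \<noteq> 0" by auto
  have b: "a^k \<noteq> 0" using \<open>a>1\<close> by simp
  have "a/(a-1)/a^k - a/(a-1)/a^(Suc k) = (a/(a-1)) * (1/a^k - 1/(a*a^k))" by (simp add: right_diff_distrib)
  also have "1/a^k - 1/(a*a^k) = (a-1)/(a*a^k)" using h b by (simp add: field_simps)
  also have "(a/(a-1)) * ((a-1)/(a*a^k)) = 1/a^k" using h b by simp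
  finally show ?thesis .
qed

locale hfl =
  fixes X :: "'a::metric_space set" and a lam :: real and Xs :: "nat \<Rightarrow> 'a set" and x0 :: 'a
  assumes fs: "filling_seq X a Xs x0" and a_ge: "a \<ge> lam" and lam2: "lam \<ge> 2"
    and lamA: "lam \<ge> 1 + a / (a - 1)"
begin

abbreviation "adj \<equiv> hf_adj X a lam Xs"
abbreviation "S \<equiv> hfS Xs"
abbreviation "G \<equiv> hf_graph_dist X a lam Xs"

definition wk :: "(nat \<Rightarrow> 'a hvert) \<Rightarrow> nat \<Rightarrow> 'a hvert \<Rightarrow> 'a hvert \<Rightarrow> bool" where
  "wk f k p q \<longleftrightarrow> f 0 = p \<and> f k = q \<and> (\<forall>i\<le>k. f i \<in> S) \<and> (\<forall>i<k. adj (f i) (f (Suc i)))"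

lemma a2: "a \<ge> 2" using a_ge lam2 by linarith
lemma apos: "a > 0" using a2 by linarith

lemma Xs_sub: "Xs k \<subseteq> X"
  using fs unfolding filling_seq_def maximal_separated_def by blast
lemma Xs0: "Xs 0 = {x0}"
  using fs unfolding filling_seq_def by blast

lemma parent:
  assumes "c \<in> X" shows "\<exists>c1\<in>Xs k. dist c c1 < 1 / a ^ k"
proof (rule ccontr)
  assume H: "\<not> ?thesis"
  have ms: "maximal_separated X (1 / a ^ k) (Xs k)" using fs unfolding filling_seq_def by blast
  have "separated (1 / a ^ k) (insert c (Xs k))"
    using ms H unfolding maximal_separated_def separated_def
    by (auto simp: dist_commute not_less)
  moreover have "insert c (Xs k) \<subseteq> X" using ms assms unfolding maximal_separated_def by blast
  ultimately have "insert c (Xs k) = Xs k" using ms unfolding maximal_separated_def by blast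
  hence "c \<in> Xs k" by blast
  moreover have "0 < 1 / a ^ k" using apos by simp
  ultimately show False using H by force
qed

lemma adj_sym: "adj p q \<Longrightarrow> adj q p"
  unfolding hf_adj_def by (auto simp: Int_commute)

lemma adj_S: "adj p q \<Longrightarrow> p \<in> S \<and> q \<in> S"
  unfolding hf_adj_def by auto

lemma Bl_int_dist: "Bl X c r \<inter> Bl X c' r' \<noteq> {} \<Longrightarrow> dist c c' < r + r'"
proof -
  assume "Bl X c r \<inter> Bl X c' r' \<noteq> {}"
  then obtain y where "dist c y < r" "dist c' y < r'" unfolding Bl_def by auto
  thus ?thesis using dist_triangle2[of c c' y] by linarith
qed

lemma adj_dist:
  assumes "adj (c,k) (c',k')"
  shows "(k' = k \<and> dist c c' < 2 * lam / a ^ k) \<or>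
         ((k = Suc k' \<or> k' = Suc k) \<and> dist c c' < 1 / a ^ k + 1 / a ^ k')"
proof -
  have h: "(k = k' \<and> Bl X c (lam / a ^ k) \<inter> Bl X c' (lam / a ^ k') \<noteq> {}) \<or>
      ((k = Suc k' \<or> k' = Suc k) \<and> Bl X c (1 / a ^ k) \<inter> Bl X c' (1 / a ^ k') \<noteq> {})"
    using assms unfolding hf_adj_def by auto
  thus ?thesis
  proof
    assume "k = k' \<and> Bl X c (lam / a ^ k) \<inter> Bl X c' (lam / a ^ k') \<noteq> {}"
    hence kk: "k = k'" and B: "Bl X c (lam / a ^ k) \<inter> Bl X c' (lam / a ^ k) \<noteq> {}" by auto
    have "dist c c' < lam / a ^ k + lam / a ^ k" by (rule Bl_int_dist[OF B])
    thus ?thesis using kk by (simp add: add_divide_distrib[symmetric])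
  next
    assume "(k = Suc k' \<or> k' = Suc k) \<and> Bl X c (1 / a ^ k) \<inter> Bl X c' (1 / a ^ k') \<noteq> {}"
    thus ?thesis using Bl_int_dist by blast
  qed
qed

lemma adj_neq: "adj p q \<Longrightarrow> p \<noteq> q" unfolding hf_adj_def by auto

lemma adj_lev: "adj p q \<Longrightarrow> snd q \<le> Suc (snd p) \<and> snd p \<le> Suc (snd q)"
  unfolding hf_adj_def by auto

lemma G_alt: "G p q = (LEAST k. \<exists>f. wk f k p q)"
proof -
  have "(\<exists>ps. length ps = Suc k \<and> hd ps = p \<and> last ps = q \<and>
     set ps \<subseteq> S \<and> (\<forall>i<k. adj (ps ! i) (ps ! Suc i))) = (\<exists>f. wk f k p q)" for k
  proof
    assume "\<exists>ps. length ps = Suc k \<and> hd ps = p \<and> last ps = q \<and>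
     set ps \<subseteq> S \<and> (\<forall>i<k. adj (ps ! i) (ps ! Suc i))"
    then obtain ps where ps: "length ps = Suc k" "hd ps = p" "last ps = q" "set ps \<subseteq> S"
      "\<forall>i<k. adj (ps ! i) (ps ! Suc i)" by blast
    have "ps \<noteq> []" using ps(1) by auto
    hence "wk ((!) ps) k p q" unfolding wk_def
      using ps by (auto simp: hd_conv_nth last_conv_nth)
    thus "\<exists>f. wk f k p q" by blast
  next
    assume "\<exists>f. wk f k p q"
    then obtain f where f: "wk f k p q" by blast
    let ?ps = "map f [0..<Suc k]"
    have "length ?ps = Suc k \<and> hd ?ps = p \<and> last ?ps = q \<and> set ?ps \<subseteq> S \<and>
       (\<forall>i<k. adj (?ps ! i) (?ps ! Suc i))"
    proof -
      have nth: "?ps ! i = f i" if "i \<le> k" for i using that by (simp del: upt_Suc)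
      have ne: "?ps \<noteq> []" by (simp del: upt_Suc)
      have "hd ?ps = p" using f nth[of 0] ne by (simp add: hd_conv_nth wk_def del: upt_Suc)
      moreover have "last ?ps = q" using f nth[of k] ne by (simp add: last_conv_nth wk_def del: upt_Suc)
      moreover have "set ?ps \<subseteq> S" using f unfolding wk_def by (auto simp del: upt_Suc)
      moreover have "\<forall>i<k. adj (?ps ! i) (?ps ! Suc i)" using f nth unfolding wk_def by simp
      ultimately show ?thesis by simp
    qed
    thus "\<exists>ps. length ps = Suc k \<and> hd ps = p \<and> last ps = q \<and>
     set ps \<subseteq> S \<and> (\<forall>i<k. adj (ps ! i) (ps ! Suc i))" by blast
  qed
  thus ?thesis unfolding hf_graph_dist_def by simp
qed

lemma G_le: "wk f k p q \<Longrightarrow> G p q \<le> k"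
  unfolding G_alt by (rule Least_le) blast

lemma G_ex: assumes "\<exists>f. wk f k p q" shows "\<exists>f. wk f (G p q) p q"
  unfolding G_alt by (rule LeastI_ex) (use assms in blast)

lemma wk_rev: "wk f k p q \<Longrightarrow> wk (\<lambda>i. f (k - i)) k q p"
proof -
  assume f: "wk f k p q"
  show ?thesis unfolding wk_def
  proof (intro conjI allI impI)
    show "f (k - 0) = q" "f (k - k) = p" using f by (auto simp: wk_def)
    fix i
    show "i \<le> k \<Longrightarrow> f (k - i) \<in> S" using f by (auto simp: wk_def)
    assume i: "i < k"
    hence e: "k - i = Suc (k - Suc i)" "k - Suc i < k" by auto
    have "adj (f (k - Suc i)) (f (Suc (k - Suc i)))" using f e(2) unfolding wk_def by blast
    thus "adj (f (k - i)) (f (k - Suc i))" using e(1) adj_sym by simp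
  qed
qed

lemma wk_app:
  assumes f: "wk f k p q" and g: "wk g l q r"
  shows "wk (\<lambda>i. if i \<le> k then f i else g (i - k)) (k + l) p r"
  unfolding wk_def
proof (intro conjI allI impI)
  show "(if 0 \<le> k then f 0 else g (0 - k)) = p" using f by (simp add: wk_def)
  show "(if k + l \<le> k then f (k + l) else g (k + l - k)) = r"
    using f g by (cases "l = 0") (auto simp: wk_def)
  fix i
  { assume "i \<le> k + l"
    show "(if i \<le> k then f i else g (i - k)) \<in> S"
    proof (cases "i \<le> k")
      case True thus ?thesis using f by (simp add: wk_def)
    next
      case False thus ?thesis using g \<open>i \<le> k + l\<close> by (simp add: wk_def)
    qed }
  { assume i: "i < k + l"
    show "adj (if i \<le> k then f i else g (i - k)) (if Suc i \<le> k then f (Suc i) else g (Suc i - k))"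
    proof (cases "i < k")
      case True thus ?thesis using f by (simp add: wk_def)
    next
      case False
      hence "Suc i - k = Suc (i - k)" "i - k < l" using i by auto
      moreover have "(if i \<le> k then f i else g (i - k)) = g (i - k)"
        using False f g by (auto simp: wk_def)
      ultimately show ?thesis using False g by (simp add: wk_def)
    qed }
qed

lemma a1: "a - 1 > 0" using a2 by linarith

lemma edge_up:
  assumes "c \<in> Xs (Suc k)" "c1 \<in> Xs k" "dist c c1 < 1 / a ^ k"
  shows "adj (c, Suc k) (c1, k)"
proof -
  have "c \<in> X" using assms(1) Xs_sub by blast
  hence "c \<in> Bl X c (1 / a ^ Suc k) \<inter> Bl X c1 (1 / a ^ k)"
    using assms(3) apos unfolding Bl_def by (simp add: dist_commute)
  thus ?thesis using assms unfolding hf_adj_def hfS_def by auto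
qed

lemma wk_edge: "adj p q \<Longrightarrow> wk (\<lambda>i. if i = 0 then p else q) 1 p q"
  unfolding wk_def using adj_S by auto

lemma wk_refl: "p \<in> S \<Longrightarrow> wk (\<lambda>i. p) 0 p p"
  unfolding wk_def by auto

lemma ancestor:
  assumes "c \<in> Xs k" "j \<le> k"
  shows "\<exists>f cj. wk f (k - j) (c, k) (cj, j) \<and> cj \<in> Xs j \<and>
           dist c cj \<le> (a / (a - 1)) / a ^ j - (a / (a - 1)) / a ^ k"
  using assms
proof (induction k arbitrary: c)
  case 0
  have j0: "j = 0" using 0 by simp
  have "wk (\<lambda>i. (c, 0)) (0 - j) (c, 0) (c, j)" using wk_refl[of "(c,0)"] 0 j0 by (simp add: hfS_def)
  moreover have "c \<in> Xs j" using 0 j0 by simp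
  moreover have "dist c c \<le> (a / (a - 1)) / a ^ j - (a / (a - 1)) / a ^ 0" using j0 by simp
  ultimately show ?case by blast
next
  case (Suc k)
  show ?case
  proof (cases "j = Suc k")
    case True
    have "wk (\<lambda>i. (c, Suc k)) (Suc k - j) (c, Suc k) (c, j)"
      using Suc.prems wk_refl[of "(c, Suc k)"] True by (simp add: hfS_def)
    moreover have "c \<in> Xs j" using Suc.prems True by simp
    moreover have "dist c c \<le> (a / (a - 1)) / a ^ j - (a / (a - 1)) / a ^ Suc k" using True by simp
    ultimately show ?thesis by blast
  next
    case False
    hence jk: "j \<le> k" using Suc.prems by auto
    have "c \<in> X" using Suc.prems Xs_sub by blast
    then obtain c1 where c1: "c1 \<in> Xs k" "dist c c1 < 1 / a ^ k" using parent by blast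
    obtain f cj where f: "wk f (k - j) (c1, k) (cj, j)" "cj \<in> Xs j"
      "dist c1 cj \<le> (a / (a - 1)) / a ^ j - (a / (a - 1)) / a ^ k"
      using Suc.IH[OF c1(1) jk] by blast
    have e: "adj (c, Suc k) (c1, k)" using edge_up Suc.prems c1 by blast
    note w = wk_app[OF wk_edge[OF e] f(1)]
    have eq: "1 + (k - j) = Suc k - j" using jk by auto
    have "(a / (a - 1)) / a ^ k - (a / (a - 1)) / a ^ Suc k = 1 / a ^ k"
      using geo_step[of a k] a2 by linarith
    moreover have "dist c cj \<le> dist c c1 + dist c1 cj" by (rule dist_triangle)
    ultimately have "dist c cj \<le> (a / (a - 1)) / a ^ j - (a / (a - 1)) / a ^ Suc k"
      using c1(2) f(3) by linarith
    moreover note w[unfolded eq]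
    ultimately show ?thesis using f(2) by blast
  qed
qed

lemma conn: assumes "p \<in> S" shows "\<exists>f. wk f (snd p) p (x0, 0)"
proof -
  obtain c k where p: "p = (c, k)" "c \<in> Xs k" using assms unfolding hfS_def by auto
  obtain f cj where "wk f (k - 0) (c, k) (cj, 0)" "cj \<in> Xs 0" using ancestor[OF p(2)] by blast
  thus ?thesis using p Xs0 by auto
qed

lemma G_walk: assumes "p \<in> S" "q \<in> S" shows "\<exists>f. wk f (G p q) p q"
proof -
  obtain f where f: "wk f (snd p) p (x0, 0)" using conn assms by blast
  obtain g where g: "wk g (snd q) q (x0, 0)" using conn assms by blast
  show ?thesis using G_ex wk_app[OF f wk_rev[OF g]] by blast
qed

lemma G_refl: "p \<in> S \<Longrightarrow> G p p = 0"
  using G_le[OF wk_refl] by auto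

lemma G_sym: assumes "p \<in> S" "q \<in> S" shows "G p q = G q p"
proof -
  have "G q p \<le> G p q" if pq: "p \<in> S" "q \<in> S" for p q
  proof -
    obtain f where "wk f (G p q) p q" using G_walk[OF pq] by blast
    thus ?thesis using wk_rev G_le by blast
  qed
  thus ?thesis using assms by (simp add: le_antisym)
qed

lemma G_tri: assumes "p \<in> S" "q \<in> S" "r \<in> S" shows "G p r \<le> G p q + G q r"
proof -
  obtain f where f: "wk f (G p q) p q" using G_walk[OF assms(1,2)] by blast
  obtain g where g: "wk g (G q r) q r" using G_walk[OF assms(2,3)] by blast
  show ?thesis using G_le[OF wk_app[OF f g]] .
qed

lemma G_adj: "adj p q \<Longrightarrow> G p q \<le> 1"
  using G_le wk_edge by blast

lemma G_one: assumes "p \<in> S" "q \<in> S" "G p q = 1" shows "adj p q"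
proof -
  obtain f where f: "wk f (G p q) p q" using G_walk[OF assms(1,2)] by blast
  hence "f 0 = p" "f 1 = q" "adj (f 0) (f (Suc 0))" using assms(3) unfolding wk_def by auto
  thus ?thesis by simp
qed

lemma G_zero: assumes "p \<in> S" "q \<in> S" "G p q = 0" shows "p = q"
proof -
  obtain f where f: "wk f (G p q) p q" using G_walk[OF assms(1,2)] by blast
  thus ?thesis using assms(3) unfolding wk_def by auto
qed

lemma close:
  assumes "(c, k) \<in> S" "(c', k') \<in> S" "j \<le> k" "j \<le> k'" "j = 0 \<or> dist c c' < 1 / a ^ j"
  shows "G (c, k) (c', k') \<le> (k - j) + (k' - j) + 1"
proof -
  let ?A = "a / (a - 1)"
  have cX: "c \<in> Xs k" "c' \<in> Xs k'" using assms(1,2) unfolding hfS_def by auto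
  obtain f cj where f: "wk f (k - j) (c, k) (cj, j)" "cj \<in> Xs j"
    "dist c cj \<le> ?A / a ^ j - ?A / a ^ k" using ancestor[OF cX(1) assms(3)] by blast
  obtain f' cj' where f': "wk f' (k' - j) (c', k') (cj', j)" "cj' \<in> Xs j"
    "dist c' cj' \<le> ?A / a ^ j - ?A / a ^ k'" using ancestor[OF cX(2) assms(4)] by blast
  have Apos: "?A / a ^ k > 0" "?A / a ^ k' > 0" using a1 apos by auto
  show ?thesis
  proof (cases "cj = cj'")
    case True
    have "G (c, k) (c', k') \<le> (k - j) + (k' - j)"
      using G_le[OF wk_app[OF f(1)[unfolded True] wk_rev[OF f'(1)]]] by simp
    thus ?thesis by simp
  next
    case False
    have j0: "j \<noteq> 0"
    proof
      assume "j = 0" thus False using f(2) f'(2) Xs0 False by auto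
    qed
    hence d: "dist c c' < 1 / a ^ j" using assms(5) by auto
    have cXX: "c \<in> X" using cX Xs_sub by blast
    have lamA': "?A \<le> lam - 1" using lamA by linarith
    have "?A / a ^ j \<le> (lam - 1) / a ^ j" by (rule divide_right_mono[OF lamA']) (use apos in simp)
    moreover have "(lam - 1) / a ^ j = lam / a ^ j - 1 / a ^ j" by (simp add: diff_divide_distrib)
    moreover have "1 / a ^ j > 0" using apos by simp
    moreover have "dist cj c = dist c cj" by (simp add: dist_commute)
    ultimately have e1: "dist cj c < lam / a ^ j"
      using f(3) Apos by linarith
    have "dist cj' c \<le> dist cj' c' + dist c' c" by (rule dist_triangle)
    moreover have "dist cj' c' = dist c' cj'" "dist c' c = dist c c'" by (simp_all add: dist_commute)
    ultimately have e2: "dist cj' c < lam / a ^ j"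
      using f'(3) Apos d \<open>?A / a ^ j \<le> (lam - 1) / a ^ j\<close>
        \<open>(lam - 1) / a ^ j = lam / a ^ j - 1 / a ^ j\<close> by linarith
    have "c \<in> Bl X cj (lam / a ^ j) \<inter> Bl X cj' (lam / a ^ j)"
      using e1 e2 cXX unfolding Bl_def by auto
    hence e: "adj (cj, j) (cj', j)"
      using f(2) f'(2) False unfolding hf_adj_def hfS_def by auto
    have "G (c, k) (c', k') \<le> (k - j) + 1 + (k' - j)"
      using G_le[OF wk_app[OF wk_app[OF f(1) wk_edge[OF e]] wk_rev[OF f'(1)]]] by simp
    thus ?thesis by simp
  qed
qed

lemma adj_dist':
  assumes "adj p q"
  shows "(snd q = snd p \<and> dist (fst p) (fst q) < 2 * lam / a ^ snd p) \<or>
         ((snd p = Suc (snd q) \<or> snd q = Suc (snd p)) \<and> dist (fst p) (fst q) < 1 / a ^ snd p + 1 / a ^ snd q)"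
  using adj_dist[of "fst p" "snd p" "fst q" "snd q"] assms by simp

lemma pow_mono_inv: "k \<le> k' \<Longrightarrow> 1 / a ^ k' \<le> 1 / a ^ k"
proof -
  assume "k \<le> k'"
  hence "a ^ k \<le> a ^ k'" using a2 by (intro power_increasing) auto
  thus ?thesis using apos by (intro divide_left_mono) auto
qed

lemma ext_min: "\<forall>j\<le>i. (T::nat) \<le> g j \<Longrightarrow> T \<le> g (Suc i) \<Longrightarrow> \<forall>j\<le>Suc i. T \<le> g j"
  by (auto simp: le_Suc_eq)
lemma ext_att: "\<exists>j\<le>i. g j = (T::nat) \<Longrightarrow> \<exists>j\<le>Suc i. g j = T"
  using le_Suc_eq by blast

lemma chain_bound:
  assumes ch: "\<forall>i<N. adj (f i) (f (Suc i))" and iN: "i \<le> N"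
  shows "\<exists>T. (\<forall>j\<le>i. T \<le> snd (f j)) \<and> (\<exists>j\<le>i. snd (f j) = T) \<and>
     snd (f 0) + snd (f i) \<le> i + 2 * T \<and>
     dist (fst (f 0)) (fst (f i)) + 3 / a ^ snd (f i) \<le>
       (6 + 2 * lam * (real i + 2 * real T - real (snd (f 0)) - real (snd (f i)))) / a ^ T"
  using iN
proof (induction i)
  case 0
  have "3 / a ^ snd (f 0) \<le> 6 / a ^ snd (f 0)" by (rule divide_right_mono) (use apos in auto)
  thus ?case
    by (intro exI[of _ "snd (f 0)"]) auto
next
  case (Suc i)
  hence iN': "i \<le> N" and iN: "i < N" by auto
  obtain T where T: "\<forall>j\<le>i. T \<le> snd (f j)" "\<exists>j\<le>i. snd (f j) = T"
     "snd (f 0) + snd (f i) \<le> i + 2 * T"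
     "dist (fst (f 0)) (fst (f i)) + 3 / a ^ snd (f i) \<le>
       (6 + 2 * lam * (real i + 2 * real T - real (snd (f 0)) - real (snd (f i)))) / a ^ T"
    using Suc.IH[OF iN'] by blast
  define k0 where "k0 = snd (f 0)"
  define c0 where "c0 = fst (f 0)"
  define k where "k = snd (f i)"
  define c where "c = fst (f i)"
  define k' where "k' = snd (f (Suc i))"
  define c' where "c' = fst (f (Suc i))"
  define R where "R = 6 + 2 * lam * (real i + 2 * real T - real k0 - real k)"
  have Tk: "T \<le> k" using T(1) k_def by auto
  have Xnn: "real i + 2 * real T - real k0 - real k \<ge> 0" using T(3) k0_def k_def by linarith
  have R6: "R \<ge> 6" unfolding R_def using Xnn lam2 by simp
  have IH: "dist c0 c + 3 / a ^ k \<le> R / a ^ T" using T(4) unfolding R_def c0_def c_def k0_def k_def .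
  have tri: "dist c0 c' \<le> dist c0 c + dist c c'" by (rule dist_triangle)
  have pT: "1 / a ^ k \<le> 1 / a ^ T" using pow_mono_inv Tk by blast
  have ad: "(k' = k \<and> dist c c' < 2 * lam / a ^ k) \<or>
         ((k = Suc k' \<or> k' = Suc k) \<and> dist c c' < 1 / a ^ k + 1 / a ^ k')"
    using adj_dist'[OF ch[rule_format, OF iN]] unfolding c_def k_def c'_def k'_def .
  have ak: "a ^ k > 0" "a ^ T > 0" "a ^ k' > 0" using apos by auto
  let ?Q = "\<exists>T'. (\<forall>j\<le>Suc i. T' \<le> snd (f j)) \<and> (\<exists>j\<le>Suc i. snd (f j) = T') \<and>
     k0 + k' \<le> Suc i + 2 * T' \<and>
     dist c0 c' + 3 / a ^ k' \<le> (6 + 2 * lam * (real (Suc i) + 2 * real T' - real k0 - real k')) / a ^ T'"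
  have "?Q"
  proof -
    { assume h: "k' = k" "dist c c' < 2 * lam / a ^ k"
      have "2 * lam * (1 / a ^ k) \<le> 2 * lam * (1 / a ^ T)" using pT lam2 by (intro mult_left_mono) auto
      hence "2 * lam / a ^ k \<le> 2 * lam / a ^ T" by simp
      have "dist c0 c' + 3 / a ^ k' \<le> (R + 2 * lam) / a ^ T"
        using IH tri h \<open>2 * lam / a ^ k \<le> 2 * lam / a ^ T\<close> by (simp add: add_divide_distrib)
      moreover have "R + 2 * lam = 6 + 2 * lam * (real (Suc i) + 2 * real T - real k0 - real k')"
        unfolding R_def using h by (simp add: algebra_simps)
      moreover have "\<forall>j\<le>Suc i. T \<le> snd (f j)" using ext_min[OF T(1)] h Tk k'_def by simp
      moreover have "\<exists>j\<le>Suc i. snd (f j) = T" using ext_att[OF T(2)] .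
      moreover have "k0 + k' \<le> Suc i + 2 * T" using T(3) h k0_def k_def by simp
      ultimately have ?Q by - (rule exI[of _ T], intro conjI, (assumption | simp)+) }
    moreover
    { assume h: "k' = Suc k" "dist c c' < 1 / a ^ k + 1 / a ^ k'"
      have "1 / a ^ k' = (1 / a) * (1 / a ^ k)" using h by simp
      moreover have "(1 / a) * (1 / a ^ k) \<le> (1/2) * (1 / a ^ k)"
        using a2 ak by (intro mult_right_mono) (auto simp: field_simps)
      ultimately have "1 / a ^ k' \<le> (1/2) * (1 / a ^ k)" by simp
      hence "dist c0 c' + 3 / a ^ k' \<le> R / a ^ T" using IH tri h by simp
      moreover have "R = 6 + 2 * lam * (real (Suc i) + 2 * real T - real k0 - real k')"
        unfolding R_def using h by simp
      moreover have "\<forall>j\<le>Suc i. T \<le> snd (f j)" using ext_min[OF T(1)] h Tk k'_def by simp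
      moreover have "\<exists>j\<le>Suc i. snd (f j) = T" using ext_att[OF T(2)] .
      moreover have "k0 + k' \<le> Suc i + 2 * T" using T(3) h k0_def k_def by simp
      ultimately have ?Q by - (rule exI[of _ T], intro conjI, (assumption | simp)+) }
    moreover
    { assume h: "k = Suc k'" "dist c c' < 1 / a ^ k + 1 / a ^ k'" "T = k"
      define B where "B = 1 / a ^ k'"
      have Bp: "B > 0" unfolding B_def using ak by simp
      have kB: "1 / a ^ k = B / a" unfolding B_def using h by simp
      have "R * (a - 1) \<ge> 6 * (a - 1)" using R6 a1 by (intro mult_right_mono) auto
      hence "R - 2 + 4 * a \<le> R * a" using a2 by (simp add: algebra_simps)
      hence "(R - 2) / a + 4 \<le> R" using apos by (simp add: field_simps)
      hence "((R - 2) / a + 4) * B \<le> R * B" using Bp by (intro mult_right_mono) auto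
      moreover have "dist c0 c' + 3 / a ^ k' \<le> ((R - 2) / a + 4) * B"
      proof -
        have "dist c0 c' + 3 / a ^ k' \<le> R / a ^ k - 3 / a ^ k + 1 / a ^ k + 1 / a ^ k' + 3 / a ^ k'"
          using IH tri h by simp
        also have "\<dots> = (R - 2) * (1 / a ^ k) + 4 * B"
        proof -
          define b where "b = 1 / a ^ k"
          have "R / a ^ k = R * b" "3 / a ^ k = 3 * b" "1 / a ^ k = b" "1 / a ^ k' = B" "3 / a ^ k' = 3 * B"
            unfolding b_def B_def by simp_all
          thus ?thesis by (simp add: algebra_simps)
        qed
        also have "\<dots> = ((R - 2) / a + 4) * B" unfolding kB using apos by (simp add: field_simps)
        finally show ?thesis .
      qed
      ultimately have "dist c0 c' + 3 / a ^ k' \<le> R / a ^ k'" unfolding B_def by simp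
      moreover have "R = 6 + 2 * lam * (real (Suc i) + 2 * real k' - real k0 - real k')"
        unfolding R_def using h by simp
      moreover have "\<forall>j\<le>Suc i. k' \<le> snd (f j)" using T(1) h k'_def by (auto simp: le_Suc_eq)
      moreover have "k0 + k' \<le> Suc i + 2 * k'" using T(3) h k0_def k_def by simp
      moreover have "\<exists>j\<le>Suc i. snd (f j) = k'" using k'_def by blast
      ultimately have ?Q by - (rule exI[of _ k'], intro conjI, (assumption | simp)+) }
    moreover
    { assume h: "k = Suc k'" "dist c c' < 1 / a ^ k + 1 / a ^ k'" "T \<noteq> k"
      hence Tk': "T \<le> k'" using Tk by simp
      have p1: "1 / a ^ k' \<le> 1 / a ^ T" using pow_mono_inv Tk' by blast
      have "4 / a ^ k' \<le> 4 * lam / a ^ T"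
      proof -
        have "4 / a ^ k' = 4 * (1 / a ^ k')" by simp
        also have "\<dots> \<le> 4 * lam * (1 / a ^ T)"
          using p1 lam2 ak by (intro mult_mono) auto
        finally show ?thesis by simp
      qed
      have "3 / a ^ k' = 3 * (1 / a ^ k')" "4 / a ^ k' = 4 * (1 / a ^ k')" "3 / a ^ k = 3 * (1 / a ^ k)"
        by simp_all
      moreover have "1 / a ^ k > 0" using ak by simp
      ultimately have "dist c0 c' + 3 / a ^ k' \<le> R / a ^ T + 4 * lam / a ^ T"
        using IH tri h(2) \<open>4 / a ^ k' \<le> 4 * lam / a ^ T\<close> by linarith
      moreover have "R / a ^ T + 4 * lam / a ^ T =
          (6 + 2 * lam * (real (Suc i) + 2 * real T - real k0 - real k')) / a ^ T"
      proof -
        have "R + 4 * lam = 6 + 2 * lam * (real (Suc i) + 2 * real T - real k0 - real k')"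
          unfolding R_def using h by (simp add: algebra_simps)
        moreover have "R / a ^ T + 4 * lam / a ^ T = (R + 4 * lam) / a ^ T" by (simp add: add_divide_distrib)
        ultimately show ?thesis by simp
      qed
      moreover have "k0 + k' \<le> Suc i + 2 * T" using T(3) h k0_def k_def by simp
      moreover have "\<forall>j\<le>Suc i. T \<le> snd (f j)" using ext_min[OF T(1)] h Tk k'_def by simp
      moreover have "\<exists>j\<le>Suc i. snd (f j) = T" using ext_att[OF T(2)] .
      moreover have "k0 + k' \<le> Suc i + 2 * T" using T(3) h k0_def k_def by simp
      ultimately have ?Q by - (rule exI[of _ T], intro conjI, (assumption | simp)+) }
    ultimately show ?Q using ad by blast
  qed
  thus ?case unfolding k0_def k_def c0_def c'_def k'_def .
qed

definition V :: "'a hvert \<Rightarrow> 'a hvert \<Rightarrow> real \<Rightarrow> 'a hvert \<Rightarrow> 'a hvert \<Rightarrow> real \<Rightarrow> real" where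
  "V u1 v1 s u2 v2 t = min (s + real (G u1 u2) + t) (min (s + real (G u1 v2) + (1 - t))
      (min ((1 - s) + real (G v1 u2) + t) ((1 - s) + real (G v1 v2) + (1 - t))))"

lemma D1_eq: "D1 X a lam Xs (u1, v1, s) (u2, v2, t) =
  (if u1 \<noteq> v1 \<and> u1 = u2 \<and> v1 = v2 then min \<bar>s - t\<bar> (V u1 v1 s u2 v2 t)
   else if u1 \<noteq> v1 \<and> u1 = v2 \<and> v1 = u2 then min \<bar>s - (1 - t)\<bar> (V u1 v1 s u2 v2 t)
   else V u1 v1 s u2 v2 t)"
proof -
  have M: "Min {w, x, y, z} = min w (min x (min y (z::real)))" for w x y z
    by (simp add: min.assoc)
  show ?thesis unfolding D1_def V_def Let_def prod.case M by (rule refl)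
qed

lemma D1_vl: "D1 X a lam Xs (vtx p) (u2, v2, t) = V p p 0 u2 v2 t"
  unfolding vtx_def D1_eq by simp

lemma D1_vr: "D1 X a lam Xs (u1, v1, s) (vtx q) = V u1 v1 s q q 0"
  unfolding vtx_def D1_eq by auto

lemma mg_mem: "(u, v, t) \<in> mg_points X a lam Xs \<longleftrightarrow> u \<in> S \<and> ((adj u v \<and> 0 \<le> t \<and> t \<le> 1) \<or> (v = u \<and> t = 0))"
  unfolding mg_points_def by auto

definition rnd :: "'a mgpoint \<Rightarrow> 'a hvert" where
  "rnd r = (if snd (snd r) = 0 then fst r else fst (snd r))"

lemma mg_S: "(u, v, t) \<in> mg_points X a lam Xs \<Longrightarrow> u \<in> S \<and> v \<in> S"
  unfolding mg_mem using adj_S by blast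

lemma rnd_S: "(u, v, t) \<in> mg_points X a lam Xs \<Longrightarrow> rnd (u, v, t) \<in> S"
  using mg_S unfolding rnd_def by auto

lemma end_bounds:
  assumes "(u, v, t) \<in> mg_points X a lam Xs" "t = 0 \<or> t = 1"
  shows "real (G (rnd (u, v, t)) u) \<le> t" "real (G (rnd (u, v, t)) v) \<le> 1 - t"
        "real (G u (rnd (u, v, t))) \<le> t" "real (G v (rnd (u, v, t))) \<le> 1 - t"
proof -
  have S: "u \<in> S" "v \<in> S" using mg_S[OF assms(1)] by auto
  have uvd: "adj u v \<or> v = u" using assms(1) unfolding mg_mem by blast
  have uv: "G u v \<le> 1 \<and> G v u \<le> 1"
  proof (cases "v = u")
    case True thus ?thesis using G_refl[OF S(1)] by simp
  next
    case False hence "adj u v" using uvd by blast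
    thus ?thesis using G_adj adj_sym by blast
  qed
  show "real (G (rnd (u, v, t)) u) \<le> t" "real (G (rnd (u, v, t)) v) \<le> 1 - t"
        "real (G u (rnd (u, v, t))) \<le> t" "real (G v (rnd (u, v, t))) \<le> 1 - t"
    using assms(2) uv G_refl[OF S(1)] G_refl[OF S(2)] unfolding rnd_def by (auto simp del: One_nat_def)
qed

lemma V_eq:
  assumes r: "(u1, v1, s) \<in> mg_points X a lam Xs" "s = 0 \<or> s = 1"
    and r': "(u2, v2, t) \<in> mg_points X a lam Xs" "t = 0 \<or> t = 1"
  shows "V u1 v1 s u2 v2 t = real (G (rnd (u1, v1, s)) (rnd (u2, v2, t)))"
proof -
  let ?e = "rnd (u1, v1, s)" and ?e' = "rnd (u2, v2, t)"
  have S: "u1 \<in> S" "v1 \<in> S" "u2 \<in> S" "v2 \<in> S" "?e \<in> S" "?e' \<in> S"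
    using mg_S[OF r(1)] mg_S[OF r'(1)] rnd_S[OF r(1)] rnd_S[OF r'(1)] by auto
  note b1 = end_bounds[OF r] and b2 = end_bounds[OF r']
  have tri: "real (G ?e ?e') \<le> real (G ?e x) + real (G x y) + real (G y ?e')"
    if "x \<in> S" "y \<in> S" for x y
  proof -
    have "G ?e ?e' \<le> G ?e x + G x ?e'" using G_tri S that by blast
    moreover have "G x ?e' \<le> G x y + G y ?e'" using G_tri S that by blast
    ultimately show ?thesis by linarith
  qed
  have l1: "real (G ?e ?e') \<le> s + real (G u1 u2) + t" using tri[of u1 u2] S b1 b2 by linarith
  have l2: "real (G ?e ?e') \<le> s + real (G u1 v2) + (1 - t)" using tri[of u1 v2] S b1 b2 by linarith
  have l3: "real (G ?e ?e') \<le> (1 - s) + real (G v1 u2) + t" using tri[of v1 u2] S b1 b2 by linarith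
  have l4: "real (G ?e ?e') \<le> (1 - s) + real (G v1 v2) + (1 - t)" using tri[of v1 v2] S b1 b2 by linarith
  have m: "V u1 v1 s u2 v2 t \<le> s + real (G u1 u2) + t"
     "V u1 v1 s u2 v2 t \<le> s + real (G u1 v2) + (1 - t)"
     "V u1 v1 s u2 v2 t \<le> (1 - s) + real (G v1 u2) + t"
     "V u1 v1 s u2 v2 t \<le> (1 - s) + real (G v1 v2) + (1 - t)"
    unfolding V_def by (simp_all add: min_le_iff_disj)
  have "real (G ?e ?e') = s + real (G u1 u2) + t \<or> real (G ?e ?e') = s + real (G u1 v2) + (1 - t) \<or>
      real (G ?e ?e') = (1 - s) + real (G v1 u2) + t \<or> real (G ?e ?e') = (1 - s) + real (G v1 v2) + (1 - t)"
    using r(2) r'(2) unfolding rnd_def by (elim disjE) simp_all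
  hence up: "V u1 v1 s u2 v2 t \<le> real (G ?e ?e')" using m by linarith
  show ?thesis using up l1 l2 l3 l4 unfolding V_def by linarith
qed

lemma min4_cases: "min w (min x (min y z)) = (r::real) \<Longrightarrow> r = w \<or> r = x \<or> r = y \<or> r = z"
  by (auto simp: min_def split: if_splits)

lemma min4_nn: "0 \<le> (w::real) \<Longrightarrow> 0 \<le> x \<Longrightarrow> 0 \<le> y \<Longrightarrow> 0 \<le> z \<Longrightarrow> 0 \<le> min w (min x (min y z))"
  by simp

lemma int01: "0 \<le> (t::real) \<Longrightarrow> t \<le> 1 \<Longrightarrow> t = of_int z \<Longrightarrow> t = 0 \<or> t = 1"
proof -
  assume "0 \<le> t" "t \<le> 1" "t = of_int z"
  hence "0 \<le> z" "z \<le> 1" by auto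
  hence "z = 0 \<or> z = 1" by auto
  thus ?thesis using \<open>t = of_int z\<close> by auto
qed

lemma param01:
  assumes r: "(u2, v2, t) \<in> mg_points X a lam Xs" and "D1 X a lam Xs (vtx p) (u2, v2, t) = real i"
  shows "t = 0 \<or> t = 1"
proof -
  have t01: "0 \<le> t" "t \<le> 1" using r unfolding mg_mem by auto
  have "V p p 0 u2 v2 t = real i" using assms D1_vl by simp
  hence "real (G p u2) + t = real i \<or> real (G p v2) + (1 - t) = real i \<or>
         1 + real (G p u2) + t = real i \<or> 1 + real (G p v2) + (1 - t) = real i"
    unfolding V_def by (drule_tac min4_cases) linarith
  hence "\<exists>z. t = of_int z"
  proof (elim disjE)
    assume "real (G p u2) + t = real i" thus ?thesis by (intro exI[of _ "int i - int (G p u2)"]) auto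
  next
    assume "real (G p v2) + (1 - t) = real i" thus ?thesis by (intro exI[of _ "1 + int (G p v2) - int i"]) auto
  next
    assume "1 + real (G p u2) + t = real i" thus ?thesis by (intro exI[of _ "int i - int (G p u2) - 1"]) auto
  next
    assume "1 + real (G p v2) + (1 - t) = real i" thus ?thesis by (intro exI[of _ "2 + int (G p v2) - int i"]) auto
  qed
  thus ?thesis using int01 t01 by blast
qed

lemma D1_nonneg:
  assumes "(u2, v2, t) \<in> mg_points X a lam Xs" shows "D1 X a lam Xs (vtx p) (u2, v2, t) \<ge> 0"
proof -
  have "0 \<le> t" "t \<le> 1" using assms unfolding mg_mem by auto
  thus ?thesis unfolding D1_vl V_def by (intro min4_nn) simp_all
qed

lemma if3_le: "(if P then min A (v::real) else if Q then min B v else v) \<le> v"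
  by simp

lemma D1_one:
  assumes r: "(u1, v1, s) \<in> mg_points X a lam Xs" "s = 0 \<or> s = 1"
    and r': "(u2, v2, t) \<in> mg_points X a lam Xs" "t = 0 \<or> t = 1"
    and d: "D1 X a lam Xs (u1, v1, s) (u2, v2, t) = 1"
  shows "G (rnd (u1, v1, s)) (rnd (u2, v2, t)) = 1"
proof -
  let ?e = "rnd (u1, v1, s)" and ?e' = "rnd (u2, v2, t)"
  have Veq: "V u1 v1 s u2 v2 t = real (G ?e ?e')" by (rule V_eq[OF r r'])
  have "D1 X a lam Xs (u1, v1, s) (u2, v2, t) \<le> V u1 v1 s u2 v2 t"
    unfolding D1_eq by (rule if3_le)
  hence ge: "real (G ?e ?e') \<ge> 1" using d Veq by simp
  have le: "real (G ?e ?e') \<le> 1"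
  proof (cases "u1 \<noteq> v1 \<and> ((u1 = u2 \<and> v1 = v2) \<or> (u1 = v2 \<and> v1 = u2))")
    case True
    hence ad: "adj u1 v1" using r(1) unfolding mg_mem by blast
    hence "G u1 v1 \<le> 1" "G v1 u1 \<le> 1" using G_adj adj_sym by blast+
    moreover have "G u1 u1 = 0" "G v1 v1 = 0" using G_refl adj_S[OF ad] by blast+
    moreover have "?e = u1 \<or> ?e = v1" unfolding rnd_def by simp
    moreover have "?e' = u1 \<or> ?e' = v1"
    proof -
      have "?e' = u2 \<or> ?e' = v2" unfolding rnd_def by simp
      moreover have "u2 = u1 \<or> u2 = v1" "v2 = u1 \<or> v2 = v1" using True by blast+
      ultimately show ?thesis by blast
    qed
    ultimately have "G ?e ?e' \<le> 1" by (elim disjE) simp_all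
    thus ?thesis by simp
  next
    case False
    have c1: "(u1 \<noteq> v1 \<and> u1 = u2 \<and> v1 = v2) = False" using False by blast
    have c2: "(u1 \<noteq> v1 \<and> u1 = v2 \<and> v1 = u2) = False" using False by blast
    have "D1 X a lam Xs (u1, v1, s) (u2, v2, t) = V u1 v1 s u2 v2 t" unfolding D1_eq c1 c2 if_False ..
    thus ?thesis using d Veq by simp
  qed
  show ?thesis using ge le by linarith
qed

definition good :: "'a mgpoint \<Rightarrow> bool" where
  "good r \<longleftrightarrow> r \<in> mg_points X a lam Xs \<and> (snd (snd r) = 0 \<or> snd (snd r) = 1)"

lemma vtx_good: "v \<in> S \<Longrightarrow> good (vtx v)"
  unfolding good_def vtx_def mg_mem by simp

lemma rnd_vtx: "rnd (vtx v) = v" unfolding rnd_def vtx_def by simp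

lemma good_D1_vtx_l: assumes "good r" "v \<in> S" shows "D1 X a lam Xs (vtx v) r = real (G v (rnd r))"
proof -
  obtain u2 v2 t where r: "r = (u2, v2, t)" by (cases r)
  have m: "(v, v, 0) \<in> mg_points X a lam Xs" using assms(2) unfolding mg_mem by simp
  have "V v v 0 u2 v2 t = real (G (rnd (v, v, 0)) (rnd (u2, v2, t)))"
    by (rule V_eq) (use m assms r in \<open>auto simp: good_def\<close>)
  moreover have "rnd (v, v, 0) = v" unfolding rnd_def by simp
  ultimately show ?thesis unfolding r D1_vl by simp
qed

lemma good_D1_vtx_r: assumes "good r" "v \<in> S" shows "D1 X a lam Xs r (vtx v) = real (G (rnd r) v)"
proof -
  obtain u2 v2 t where r: "r = (u2, v2, t)" by (cases r)
  have m: "(v, v, 0) \<in> mg_points X a lam Xs" using assms(2) unfolding mg_mem by simp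
  have "V u2 v2 t v v 0 = real (G (rnd (u2, v2, t)) (rnd (v, v, 0)))"
    by (rule V_eq) (use m assms r in \<open>auto simp: good_def\<close>)
  moreover have "rnd (v, v, 0) = v" unfolding rnd_def by simp
  ultimately show ?thesis unfolding r D1_vr by simp
qed

lemma good_D1_one: assumes "good r" "good r'" "D1 X a lam Xs r r' = 1" shows "G (rnd r) (rnd r') = 1"
proof -
  obtain u1 v1 s where r: "r = (u1, v1, s)" by (cases r)
  obtain u2 v2 t where r': "r' = (u2, v2, t)" by (cases r')
  show ?thesis unfolding r r'
    by (rule D1_one) (use assms r r' in \<open>auto simp: good_def\<close>)
qed

lemma good_rnd_S: "good r \<Longrightarrow> rnd r \<in> S"
  using rnd_S unfolding good_def by (cases r) blast

lemma int_good: assumes "r \<in> mg_points X a lam Xs" "p \<in> S" "D1 X a lam Xs (vtx p) r = real i"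
  shows "good r"
proof -
  obtain u2 v2 t where r: "r = (u2, v2, t)" by (cases r)
  have "t = 0 \<or> t = 1" by (rule param01) (use assms r in auto)
  thus ?thesis using assms r unfolding good_def by simp
qed

lemma geo_sub: "geodesic_seg X a lam Xs p q P \<Longrightarrow> P \<subseteq> mg_points X a lam Xs"
  unfolding geodesic_seg_def by blast

lemma geo_extract:
  assumes geo: "geodesic_seg X a lam Xs (vtx p) (vtx q) P" and pS: "p \<in> S" and qS: "q \<in> S"
  shows "\<exists>g. (\<forall>i\<le>G p q. g i \<in> S \<and> G p (g i) = i \<and> G (g i) q = G p q - i \<and>
              (\<exists>r\<in>P. \<forall>v\<in>S. D1 X a lam Xs (vtx v) r = real (G v (g i)))) \<and>
             (\<forall>i<G p q. adj (g i) (g (Suc i)))"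
proof -
  obtain \<gamma> L where L: "L = D1 X a lam Xs (vtx p) (vtx q)" and gP: "\<gamma> ` {0..L} = P"
    and g0: "\<gamma> 0 = vtx p" and gL: "\<gamma> L = vtx q"
    and gm: "\<forall>s\<in>{0..L}. \<gamma> s \<in> mg_points X a lam Xs"
    and gd: "\<forall>s\<in>{0..L}. \<forall>t\<in>{0..L}. D1 X a lam Xs (\<gamma> s) (\<gamma> t) = \<bar>s - t\<bar>"
    using geo unfolding geodesic_seg_def by blast
  have LG: "L = real (G p q)" using good_D1_vtx_l[OF vtx_good[OF qS] pS] L rnd_vtx by simp
  define g where "g i = rnd (\<gamma> (real i))" for i
  have good: "good (\<gamma> (real i))" if "i \<le> G p q" for i
  proof -
    have iL: "real i \<in> {0..L}" using that LG by simp
    have "D1 X a lam Xs (vtx p) (\<gamma> (real i)) = real i"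
      using gd iL g0 LG by (metis atLeastAtMost_iff diff_0 abs_minus_cancel abs_of_nat of_nat_0_le_iff order_refl)
    thus ?thesis using int_good gm iL pS by blast
  qed
  have P1: "g i \<in> S \<and> G p (g i) = i \<and> G (g i) q = G p q - i \<and>
              (\<exists>r\<in>P. \<forall>v\<in>S. D1 X a lam Xs (vtx v) r = real (G v (g i)))" if "i \<le> G p q" for i
  proof -
    have iL: "real i \<in> {0..L}" using that LG by simp
    have L0: "0 \<in> {0..L}" "L \<in> {0..L}" using LG by auto
    have gd_i: "good (\<gamma> (real i))" using good that by blast
    have "g i \<in> S" unfolding g_def using good_rnd_S gd_i by blast
    moreover have "real (G p (g i)) = real i"
    proof -
      have "D1 X a lam Xs (\<gamma> 0) (\<gamma> (real i)) = real i" using gd iL L0 by simp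
      thus ?thesis using good_D1_vtx_l[OF gd_i pS] g0 unfolding g_def by simp
    qed
    moreover have "real (G (g i) q) = real (G p q) - real i"
    proof -
      have "D1 X a lam Xs (\<gamma> (real i)) (\<gamma> L) = L - real i" using gd iL L0 by auto
      thus ?thesis using good_D1_vtx_r[OF gd_i qS] gL LG unfolding g_def by simp
    qed
    moreover have "\<exists>r\<in>P. \<forall>v\<in>S. D1 X a lam Xs (vtx v) r = real (G v (g i))"
      using good_D1_vtx_l[OF gd_i] gP iL unfolding g_def by blast
    ultimately show ?thesis using that by simp
  qed
  have P2: "adj (g i) (g (Suc i))" if "i < G p q" for i
  proof -
    have iL: "real i \<in> {0..L}" "real (Suc i) \<in> {0..L}" using that LG by auto
    have gd2: "good (\<gamma> (real i))" "good (\<gamma> (real (Suc i)))" using good[of i] good[of "Suc i"] that by auto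
    have "D1 X a lam Xs (\<gamma> (real i)) (\<gamma> (real (Suc i))) = 1" using gd iL by simp
    hence "G (g i) (g (Suc i)) = 1" using good_D1_one[OF gd2] unfolding g_def by simp
    thus ?thesis using G_one good_rnd_S gd2 unfolding g_def by blast
  qed
  show ?thesis using P1 P2 by blast
qed

lemma G_lev: assumes "p \<in> S" "q \<in> S" shows "snd q \<le> snd p + G p q" "snd p \<le> snd q + G p q"
proof -
  obtain f where f: "wk f (G p q) p q" using G_walk[OF assms] by blast
  have ch: "\<forall>i<G p q. adj (f i) (f (Suc i))" using f unfolding wk_def by blast
  obtain T where T: "\<forall>j\<le>G p q. T \<le> snd (f j)" "snd (f 0) + snd (f (G p q)) \<le> G p q + 2 * T"
    using chain_bound[OF ch order_refl] by blast
  have e: "f 0 = p" "f (G p q) = q" using f unfolding wk_def by auto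
  have "T \<le> snd p" "T \<le> snd q" using T(1)[rule_format, of 0] T(1)[rule_format, of "G p q"] e by simp_all
  thus "snd q \<le> snd p + G p q" "snd p \<le> snd q + G p q" using T(2) e by simp_all
qed

lemma vert:
  assumes ch: "\<forall>i<N. adj (f i) (f (Suc i))" and jN: "j \<le> N" and lv: "snd (f j) + j \<le> snd (f 0)"
  shows "snd (f j) + j = snd (f 0) \<and> dist (fst (f 0)) (fst (f j)) \<le> 3 / a ^ snd (f j)"
proof -
  obtain T where T: "\<forall>i\<le>j. T \<le> snd (f i)" "snd (f 0) + snd (f j) \<le> j + 2 * T"
    "dist (fst (f 0)) (fst (f j)) + 3 / a ^ snd (f j) \<le>
       (6 + 2 * lam * (real j + 2 * real T - real (snd (f 0)) - real (snd (f j)))) / a ^ T"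
    using chain_bound[OF ch jN] by blast
  have Tj: "T \<le> snd (f j)" using T(1) by simp
  have eq: "snd (f j) + j = snd (f 0)" "T = snd (f j)" using Tj T(2) lv by linarith+
  have "real j + 2 * real T - real (snd (f 0)) - real (snd (f j)) = 0" using eq by linarith
  hence "dist (fst (f 0)) (fst (f j)) + 3 / a ^ snd (f j) \<le> 6 / a ^ snd (f j)" using T(3) eq(2) by simp
  moreover have "6 / a ^ snd (f j) = 3 / a ^ snd (f j) + 3 / a ^ snd (f j)" by simp
  ultimately show ?thesis using eq by linarith
qed

lemma inv_pow_shift: "j \<le> k \<Longrightarrow> 1 / a ^ (k - j) = a ^ j / a ^ k"
proof -
  assume "j \<le> k"
  hence "a ^ k = a ^ (k - j) * a ^ j" by (simp add: power_add[symmetric])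
  thus ?thesis using apos by simp
qed

lemma close2:
  assumes "(c, k) \<in> S" "(c', k') \<in> S" "nt - s \<le> k" "nt - s \<le> k'"
    "dist c c' < C / a ^ nt" "C \<le> a ^ s"
  shows "G (c, k) (c', k') \<le> (k - (nt - s)) + (k' - (nt - s)) + 1"
proof (rule close[OF assms(1-4)])
  show "nt - s = 0 \<or> dist c c' < 1 / a ^ (nt - s)"
  proof (cases "s \<le> nt")
    case True
    have "C / a ^ nt \<le> a ^ s / a ^ nt" using assms(6) apos by (simp add: divide_right_mono)
    thus ?thesis using inv_pow_shift[OF True] assms(5) by simp
  qed simp
qed

lemma two_pow: "9 \<le> t \<Longrightarrow> 4 * real t + 17 \<le> (3/4) * 2 ^ (t - 2)"
proof (induction t rule: nat_induct_at_least)
  case base thus ?case by simp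
next
  case (Suc t)
  have "Suc t - 2 = Suc (t - 2)" using Suc.hyps by simp
  hence "(2::real) ^ (Suc t - 2) = 2 * 2 ^ (t - 2)" by simp
  moreover have "(1::real) \<le> 2 ^ (t - 2)" by simp
  ultimately show ?case using Suc.IH by simp
qed

lemma ctr_facts:
  assumes xX: "x \<in> X" and yX: "y \<in> X" and dpos: "dist x y > 0" and u: "u \<in> ctr X a Xs x y"
  shows "\<exists>zt nt. u = (zt, nt) \<and> zt \<in> Xs nt \<and> dist x y < 4 / a ^ nt \<and>
           dist x y > 1 / a ^ Suc nt \<and> dist x zt < 2 / a ^ nt \<and> dist y zt < 2 / a ^ nt"
proof -
  define nt where "nt = ctr_level X a Xs x y"
  define Pr where "Pr k \<longleftrightarrow> (\<exists>z\<in>Xs k. x \<in> Bl X z (2 / a ^ k) \<and> y \<in> Bl X z (2 / a ^ k))" for k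
  have ntG: "nt = (GREATEST k. Pr k)" unfolding nt_def ctr_level_def Pr_def ..
  obtain zt where zt: "u = (zt, nt)" "zt \<in> Xs nt" "x \<in> Bl X zt (2 / a ^ nt)" "y \<in> Bl X zt (2 / a ^ nt)"
    using u unfolding ctr_def nt_def by blast
  have d1: "dist zt x < 2 / a ^ nt" "dist zt y < 2 / a ^ nt" using zt unfolding Bl_def by auto
  have dxy: "dist x y < 4 / a ^ nt"
  proof -
    have "dist x y \<le> dist zt x + dist zt y" by (rule dist_triangle3)
    thus ?thesis using d1 by simp
  qed
  have bnd: "k \<le> nat \<lceil>4 / dist x y\<rceil>" if Pk: "Pr k" for k
  proof -
    obtain z where "x \<in> Bl X z (2 / a ^ k)" "y \<in> Bl X z (2 / a ^ k)" using Pk unfolding Pr_def by blast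
    hence z: "dist z x < 2 / a ^ k" "dist z y < 2 / a ^ k" unfolding Bl_def by auto
    have "dist x y \<le> dist z x + dist z y" by (rule dist_triangle3)
    hence dk: "dist x y < 4 / a ^ k" using z by simp
    have ak: "a ^ k > 0" using apos by simp
    have "a ^ k < 4 / dist x y" using dk dpos ak by (simp add: field_simps)
    moreover have "real k < 2 ^ k"
    proof -
      have "real k < real (2 ^ k)" by (simp only: of_nat_less_iff less_exp)
      thus ?thesis by simp
    qed
    moreover have "(2::real) ^ k \<le> a ^ k" using a2 by (intro power_mono) auto
    ultimately have "real k < 4 / dist x y" by linarith
    thus ?thesis by linarith
  qed
  have notP: "\<not> Pr (Suc nt)"
  proof
    assume "Pr (Suc nt)"
    hence "Suc nt \<le> nt" unfolding ntG by (rule Greatest_le_nat) (use bnd in blast)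
    thus False by simp
  qed
  obtain z' where z': "z' \<in> Xs (Suc nt)" "dist x z' < 1 / a ^ Suc nt" using parent[OF xX] by blast
  have p1: "1 / a ^ Suc nt < 2 / a ^ Suc nt" using apos by (simp add: divide_strict_right_mono)
  have "dist y z' \<ge> 2 / a ^ Suc nt"
  proof (rule ccontr)
    assume "\<not> ?thesis"
    hence "dist z' y < 2 / a ^ Suc nt" by (simp add: dist_commute)
    moreover have "dist z' x < 2 / a ^ Suc nt" using z'(2) p1 by (simp add: dist_commute)
    ultimately have "Pr (Suc nt)" unfolding Pr_def Bl_def using z'(1) xX yX by blast
    thus False using notP by blast
  qed
  moreover have "dist y z' \<le> dist y x + dist x z'" by (rule dist_triangle)
  ultimately have "dist x y > 1 / a ^ Suc nt" using z'(2) by (simp add: dist_commute)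
  thus ?thesis using zt d1 dxy by (intro exI[of _ zt] exI[of _ nt]) (simp add: dist_commute)
qed

lemma vert_case:
  assumes ch: "\<forall>i<N. adj (f i) (f (Suc i))" and f0: "f 0 = (c0, k0)" and jN: "j \<le> N"
    and lv: "snd (f j) \<le> nt" and jd: "j = k0 - nt" and ntk: "nt \<le> k0" and uS: "(zt, nt) \<in> S"
    and d: "dist c0 zt < 3 / a ^ nt" and fS: "f j \<in> S"
  shows "G (zt, nt) (f j) \<le> 7"
proof -
  have "snd (f j) + j \<le> snd (f 0)" using lv jd ntk f0 by simp
  from vert[OF ch jN this] have v0: "snd (f j) + j = snd (f 0)" "dist c0 (fst (f j)) \<le> 3 / a ^ snd (f j)"
    using f0 by auto
  have v1: "snd (f j) = nt" using v0(1) f0 jd ntk by simp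
  have v: "snd (f j) = nt" "dist c0 (fst (f j)) \<le> 3 / a ^ nt" using v1 v0(2) by simp_all
  obtain c where c: "f j = (c, nt)" using v(1) by (cases "f j") auto
  have "dist zt c \<le> dist zt c0 + dist c0 c" by (rule dist_triangle)
  hence "dist zt c < 6 / a ^ nt" using d v(2) c by (simp add: dist_commute)
  moreover have "(6::real) \<le> a ^ 3"
  proof -
    have "(2::real) ^ 3 \<le> a ^ 3" using a2 by (intro power_mono) auto
    thus ?thesis by simp
  qed
  moreover have "(c, nt) \<in> S" using fS c by simp
  ultimately have "G (zt, nt) (c, nt) \<le> (nt - (nt - 3)) + (nt - (nt - 3)) + 1"
    using close2[OF uS, of c nt nt 3 6] by simp
  thus ?thesis using c by simp
qed

lemma inf_le:
  assumes "geodesic_seg X a lam Xs p q P" "r \<in> P" "D1 X a lam Xs (vtx v) r \<le> K"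
  shows "(INF r\<in>P. D1 X a lam Xs (vtx v) r) \<le> K"
proof -
  have "P \<subseteq> mg_points X a lam Xs" using geo_sub[OF assms(1)] .
  have "\<forall>r\<in>P. 0 \<le> D1 X a lam Xs (vtx v) r"
  proof
    fix r assume "r \<in> P"
    moreover obtain u2 v2 t where "r = (u2, v2, t)" by (cases r)
    ultimately show "0 \<le> D1 X a lam Xs (vtx v) r" using D1_nonneg \<open>P \<subseteq> mg_points X a lam Xs\<close> by blast
  qed
  hence "bdd_below ((\<lambda>r. D1 X a lam Xs (vtx v) r) ` P)" by (intro bdd_belowI[of _ 0]) auto
  thus ?thesis using cINF_lower2 assms(2,3) by fast
qed

lemma G_v0: assumes "(c, k) \<in> S" shows "G (x0, 0) (c, k) = k" "G (c, k) (x0, 0) = k"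
proof -
  have v0S: "(x0, 0) \<in> S" using Xs0 unfolding hfS_def by simp
  have "k \<le> G (x0, 0) (c, k)" using G_lev(1)[OF v0S assms] by simp
  moreover have "G (c, k) (x0, 0) \<le> k" using conn[OF assms] G_le by fastforce
  moreover have "G (x0, 0) (c, k) = G (c, k) (x0, 0)" using G_sym[OF v0S assms] .
  ultimately show "G (x0, 0) (c, k) = k" "G (c, k) (x0, 0) = k" by simp_all
qed

lemma mid_case:
  assumes geo: "geodesic_seg X a lam Xs (vtx (z, m)) (vtx (w, n)) P"
    and zS: "(z, m) \<in> S" and wS: "(w, n) \<in> S" and uS: "(zt, nt) \<in> S"
    and dxz: "dist x z < 1 / a ^ m" and dyw: "dist y w < 1 / a ^ n"
    and hsum: "1 / a ^ m + 1 / a ^ n \<le> dist x y / 4"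
    and dlo: "dist x y > 1 / a ^ Suc nt" and dhi: "dist x y < 4 / a ^ nt"
    and dxzt: "dist x zt < 2 / a ^ nt" and mnt: "nt < m" "nt < n"
  shows "\<exists>r\<in>P. D1 X a lam Xs (vtx (zt, nt)) r \<le> 80"
proof -
  obtain g where g: "\<forall>i\<le>G (z, m) (w, n). g i \<in> S \<and> G (z, m) (g i) = i \<and> G (g i) (w, n) = G (z, m) (w, n) - i \<and>
              (\<exists>r\<in>P. \<forall>v\<in>S. D1 X a lam Xs (vtx v) r = real (G v (g i)))"
     "\<forall>i<G (z, m) (w, n). adj (g i) (g (Suc i))"
    using geo_extract[OF geo zS wS] by blast
  define L where "L = G (z, m) (w, n)"
  have gS: "\<And>i. i \<le> L \<Longrightarrow> g i \<in> S" using g(1) unfolding L_def by blast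
  have ch: "\<forall>i<L. adj (g i) (g (Suc i))" using g(2) unfolding L_def .
  have "g 0 \<in> S" "G (z, m) (g 0) = 0" using g(1)[rule_format, of 0] by simp_all
  hence g0: "g 0 = (z, m)" using G_zero[OF zS] by metis
  have "g L \<in> S" "G (g L) (w, n) = 0" using g(1)[rule_format, of L] unfolding L_def by simp_all
  hence gL: "g L = (w, n)" using G_zero[OF _ wS] by metis
  have ap: "\<And>k. a ^ k > 0" using apos by simp
  have a3: "(8::real) \<le> a ^ 3"
  proof -
    have "(2::real) ^ 3 \<le> a ^ 3" using a2 by (intro power_mono) auto
    thus ?thesis by simp
  qed
  have dzw: "dist z w < 5 / a ^ nt"
  proof -
    have "dist z w \<le> dist z x + dist x w" by (rule dist_triangle)
    moreover have "dist x w \<le> dist x y + dist y w" by (rule dist_triangle)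
    ultimately have "dist z w \<le> dist x z + dist x y + dist y w" by (simp add: dist_commute)
    thus ?thesis using dxz dyw hsum dhi by simp
  qed
  have "G (z, m) (w, n) \<le> (m - (nt - 3)) + (n - (nt - 3)) + 1"
    by (rule close2[OF zS wS _ _ dzw]) (use mnt a3 in auto)
  hence Lub: "L + 2 * nt \<le> m + n + 7" unfolding L_def using mnt by linarith
  obtain T where T: "\<forall>j\<le>L. T \<le> snd (g j)" "\<exists>j\<le>L. snd (g j) = T"
     "snd (g 0) + snd (g L) \<le> L + 2 * T"
     "dist (fst (g 0)) (fst (g L)) + 3 / a ^ snd (g L) \<le>
       (6 + 2 * lam * (real L + 2 * real T - real (snd (g 0)) - real (snd (g L)))) / a ^ T"
    using chain_bound[OF ch order_refl] by blast
  define XL where "XL = real L + 2 * real T - real m - real n"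
  have T3: "m + n \<le> L + 2 * T" using T(3) g0 gL by simp
  have XL0: "XL \<ge> 0" unfolding XL_def using T3 by linarith
  have Tlo: "nt \<le> T + 3" using T3 Lub by linarith
  have "real (L + 2 * nt) \<le> real (m + n + 7)" using Lub by (simp only: of_nat_le_iff)
  hence XLub: "XL \<le> 2 * (real T - real nt) + 7" unfolding XL_def by simp
  have T4: "dist z w \<le> (6 + 2 * lam * XL) / a ^ T"
  proof -
    have "dist z w + 3 / a ^ n \<le> (6 + 2 * lam * XL) / a ^ T" using T(4) g0 gL unfolding XL_def by simp
    moreover have "3 / a ^ n > 0" using ap by simp
    ultimately show ?thesis by linarith
  qed
  have Thi: "T \<le> nt + 8"
  proof (rule ccontr)
    assume "\<not> T \<le> nt + 8"
    hence t9: "9 \<le> T - nt" by simp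
    define t where "t = T - nt"
    have Tt: "T = Suc nt + (t - 1)" unfolding t_def using t9 by simp
    have low: "dist z w > (3/4) / a ^ Suc nt"
    proof -
      have "dist x y \<le> dist x z + dist z y" by (rule dist_triangle)
      moreover have "dist z y \<le> dist z w + dist w y" by (rule dist_triangle)
      ultimately have "dist x y \<le> dist x z + dist z w + dist y w" by (simp add: dist_commute)
      hence "dist z w \<ge> (3/4) * dist x y" using dxz dyw hsum by simp
      moreover have "(3/4) * dist x y > (3/4) * (1 / a ^ Suc nt)" using dlo by simp
      ultimately show ?thesis by simp
    qed
    define Q where "Q = 6 + 2 * a * (2 * real t + 7)"
    have "2 * lam * XL \<le> 2 * a * (2 * real t + 7)"
    proof -
      have "XL \<le> 2 * real t + 7" using XLub t9 unfolding t_def by simp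
      hence "lam * XL \<le> a * (2 * real t + 7)" using a_ge lam2 XL0 by (intro mult_mono) auto
      thus ?thesis by simp
    qed
    hence "(6 + 2 * lam * XL) / a ^ T \<le> Q / a ^ T" unfolding Q_def using ap[of T] by (intro divide_right_mono) auto
    hence lt: "(3/4) / a ^ Suc nt < Q / (a ^ Suc nt * a ^ (t - 1))"
      using low T4 Tt by (simp add: power_add)
    define E where "E = a ^ Suc nt"
    define F where "F = a ^ (t - 1)"
    have EF: "E > 0" "F > 0" unfolding E_def F_def using ap[of "Suc nt"] ap[of "t - 1"] by blast+
    have "(3/4) / E * (E * F) < Q / (E * F) * (E * F)"
      using lt EF unfolding E_def[symmetric] F_def[symmetric] by (intro mult_strict_right_mono) auto
    hence QF: "(3/4) * F < Q" using EF by simp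
    have tt: "t - 1 = Suc (t - 2)" using t9 unfolding t_def by simp
    have Fe: "F = a * a ^ (t - 2)" unfolding F_def tt by simp
    have "(2::real) ^ (t - 2) \<le> a ^ (t - 2)" using a2 by (intro power_mono) auto
    moreover have "4 * real t + 17 \<le> (3/4) * 2 ^ (t - 2)" using two_pow t9 unfolding t_def by blast
    ultimately have "4 * real t + 17 \<le> (3/4) * a ^ (t - 2)" by linarith
    hence "a * (4 * real t + 17) \<le> a * ((3/4) * a ^ (t - 2))" by (rule mult_left_mono) (use apos in simp)
    moreover have "a * ((3/4) * a ^ (t - 2)) = (3/4) * F" using Fe by simp
    ultimately have "a * (4 * real t + 17) \<le> (3/4) * F" by simp
    moreover have "Q \<le> a * (4 * real t + 17)" unfolding Q_def using a2 by (simp add: algebra_simps)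
    ultimately show False using QF by simp
  qed
  obtain i where i: "i \<le> L" "snd (g i) = T" using T(2) by blast
  have chi: "\<forall>j<L. adj (g j) (g (Suc j))" using ch .
  obtain T' where T': "\<forall>j\<le>i. T' \<le> snd (g j)" "\<exists>j\<le>i. snd (g j) = T'"
     "snd (g 0) + snd (g i) \<le> i + 2 * T'"
     "dist (fst (g 0)) (fst (g i)) + 3 / a ^ snd (g i) \<le>
       (6 + 2 * lam * (real i + 2 * real T' - real (snd (g 0)) - real (snd (g i)))) / a ^ T'"
    using chain_bound[OF ch i(1)] by blast
  have TT: "T' = T"
  proof -
    have "T' \<le> T" using T'(1) i by auto
    moreover obtain j where "j \<le> i" "snd (g j) = T'" using T'(2) by blast
    hence "T \<le> T'" using T(1) i(1) by auto
    ultimately show ?thesis by simp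
  qed
  obtain c where c: "g i = (c, T)" using i(2) by (cases "g i") auto
  have ciS: "(c, T) \<in> S" using gS[OF i(1)] c by simp
  define Xs' where "Xs' = real i + real T - real m"
  have X0: "Xs' \<ge> 0" unfolding Xs'_def using T'(3) g0 i(2) TT by simp
  have "G (g i) (w, n) = L - i" using g(1)[rule_format, of i] i(1) unfolding L_def by simp
  moreover have "n \<le> snd (g i) + G (g i) (w, n)" using G_lev(1)[OF gS[OF i(1)] wS] by simp
  ultimately have "n + i \<le> T + L" using i by simp
  hence "Xs' \<le> XL" unfolding Xs'_def XL_def by linarith
  moreover have "real T \<le> real nt + 8" using Thi by simp
  ultimately have X23: "Xs' \<le> 23" using XLub by argo
  have dzc: "dist z c \<le> (3 + 46 * a) / a ^ T"
  proof -
    have "dist z c + 3 / a ^ T \<le> (6 + 2 * lam * Xs') / a ^ T"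
      using T'(4) g0 c TT unfolding Xs'_def by (simp add: algebra_simps)
    moreover have "2 * lam * Xs' \<le> 2 * a * 23" using a_ge lam2 X0 X23 by (intro mult_mono) auto
    hence "(6 + 2 * lam * Xs') / a ^ T \<le> (6 + 46 * a) / a ^ T" using ap[of T] by (intro divide_right_mono) auto
    moreover have "(6 + 46 * a) / a ^ T = (3 + 46 * a) / a ^ T + 3 / a ^ T" by (simp add: add_divide_distrib)
    ultimately show ?thesis by linarith
  qed
  have pT: "1 / a ^ T \<le> a ^ 3 / a ^ nt"
  proof -
    have "a ^ nt \<le> a ^ (T + 3)" using Tlo a2 by (intro power_increasing) auto
    hence "a ^ nt \<le> a ^ 3 * a ^ T" by (simp add: power_add mult.commute)
    thus ?thesis using ap by (simp add: field_simps)
  qed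
  define C where "C = (3 + 46 * a) * a ^ 3 + 3"
  have dct: "dist zt c < C / a ^ nt"
  proof -
    have "dist zt c \<le> dist zt x + dist x z + dist z c"
      using dist_triangle[of zt c x] dist_triangle[of x c z] by simp
    moreover have "dist z c \<le> (3 + 46 * a) * a ^ 3 / a ^ nt"
    proof -
      have "(3 + 46 * a) / a ^ T = (3 + 46 * a) * (1 / a ^ T)" by simp
      also have "\<dots> \<le> (3 + 46 * a) * (a ^ 3 / a ^ nt)" using pT a2 by (intro mult_left_mono) auto
      finally show ?thesis using dzc by simp
    qed
    moreover have "dist x z < 1 / a ^ nt" using dxz pow_mono_inv[of nt m] mnt by simp
    moreover have "C / a ^ nt = (3 + 46 * a) * a ^ 3 / a ^ nt + 1 / a ^ nt + 2 / a ^ nt"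
      unfolding C_def by (simp add: add_divide_distrib)
    ultimately show ?thesis using dxzt by (simp add: dist_commute)
  qed
  have C10: "C \<le> a ^ 10"
  proof -
    have a4: "(16::real) \<le> a ^ 4" "(64::real) \<le> a ^ 6"
    proof -
      have "(2::real) ^ 4 \<le> a ^ 4" using a2 by (intro power_mono) simp_all
      moreover have "(2::real) ^ 6 \<le> a ^ 6" using a2 by (intro power_mono) simp_all
      ultimately show "(16::real) \<le> a ^ 4" "(64::real) \<le> a ^ 6" by simp_all
    qed
    have e4: "a ^ 4 = a * a ^ 3" "a ^ 10 = a ^ 6 * a ^ 4" by (simp_all add: power_add[symmetric] power_Suc[symmetric])
    have "2 * a ^ 3 \<le> a * a ^ 3" using a2 ap[of 3] by (intro mult_right_mono) auto
    hence "3 * a ^ 3 \<le> (3/2) * (a * a ^ 3)" by simp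
    hence "C \<le> 48.5 * a ^ 4" unfolding C_def using e4 a4 by (simp add: algebra_simps)
    also have "\<dots> \<le> a ^ 6 * a ^ 4" using a4 by (intro mult_right_mono) auto
    finally show ?thesis using e4 by simp
  qed
  have "G (zt, nt) (c, T) \<le> (nt - (nt - 10)) + (T - (nt - 10)) + 1"
    by (rule close2[OF uS ciS _ _ dct C10]) (use Tlo in auto)
  moreover have "nt - (nt - 10) + (T - (nt - 10)) + 1 \<le> 29" using Thi by linarith
  ultimately have G29: "G (zt, nt) (g i) \<le> 29" unfolding c by linarith
  obtain r where r: "r \<in> P" "\<forall>v\<in>S. D1 X a lam Xs (vtx v) r = real (G v (g i))"
    using g(1)[rule_format, of i] i(1) unfolding L_def by blast
  have "D1 X a lam Xs (vtx (zt, nt)) r = real (G (zt, nt) (g i))" using r(2) uS by blast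
  also have "\<dots> \<le> 80" using G29 by simp
  finally show ?thesis using r(1) by blast
qed

lemma main:
  assumes xX: "x \<in> X" and yX: "y \<in> X"
    and zS: "(z, m) \<in> S" and wS: "(w, n) \<in> S"
    and xB: "x \<in> Bl X z (1 / a ^ m)" and yB: "y \<in> Bl X w (1 / a ^ n)"
    and hs: "1 / a ^ m + 1 / a ^ n < dist x y / a ^ 2"
    and u: "u \<in> ctr X a Xs x y"
    and g1: "geodesic_seg X a lam Xs (vtx (x0, 0)) (vtx (z, m)) P1"
    and g2: "geodesic_seg X a lam Xs (vtx (z, m)) (vtx (w, n)) P2"
    and g3: "geodesic_seg X a lam Xs (vtx (w, n)) (vtx (x0, 0)) P3"
  shows "approx_center X a lam Xs 80 (vtx u) P1 P2 P3"
proof -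
  have am: "a ^ m > 0" "a ^ n > 0" using apos by auto
  have a4: "a ^ 2 \<ge> 4"
  proof -
    have "(2::real) ^ 2 \<le> a ^ 2" using a2 by (intro power_mono) auto
    thus ?thesis by simp
  qed
  have "0 < 1 / a ^ m" "0 < 1 / a ^ n" using am by simp_all
  hence "0 < 1 / a ^ m + 1 / a ^ n" by linarith
  hence "0 < dist x y / a ^ 2" using hs by linarith
  hence dpos: "dist x y > 0" using apos by (simp add: zero_less_divide_iff)
  obtain zt nt where ct: "u = (zt, nt)" "zt \<in> Xs nt" "dist x y < 4 / a ^ nt"
     "dist x y > 1 / a ^ Suc nt" "dist x zt < 2 / a ^ nt" "dist y zt < 2 / a ^ nt"
    using ctr_facts[OF xX yX dpos u] by blast
  have uS: "(zt, nt) \<in> S" using ct(2) unfolding hfS_def by simp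
  have v0S: "(x0, 0) \<in> S" using Xs0 unfolding hfS_def by simp
  have dxz: "dist x z < 1 / a ^ m" using xB unfolding Bl_def by (simp add: dist_commute)
  have dyw: "dist y w < 1 / a ^ n" using yB unfolding Bl_def by (simp add: dist_commute)
  have "dist x y / a ^ 2 \<le> dist x y / 4" using a4 dpos by (intro divide_left_mono) auto
  hence hsum: "1 / a ^ m + 1 / a ^ n \<le> dist x y / 4" using hs by linarith
  have lt: "1 / a ^ m < 1 / a ^ nt" "1 / a ^ n < 1 / a ^ nt"
  proof -
    have "dist x y / 4 < 1 / a ^ nt" using ct(3) by simp
    thus "1 / a ^ m < 1 / a ^ nt" "1 / a ^ n < 1 / a ^ nt" using hsum am by (smt (verit) divide_pos_pos)+
  qed
  have mnt: "nt < m" "nt < n"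
  proof -
    show "nt < m"
    proof (rule ccontr)
      assume "\<not> nt < m" hence "1 / a ^ nt \<le> 1 / a ^ m" using pow_mono_inv by simp
      thus False using lt(1) by simp
    qed
    show "nt < n"
    proof (rule ccontr)
      assume "\<not> nt < n" hence "1 / a ^ nt \<le> 1 / a ^ n" using pow_mono_inv by simp
      thus False using lt(2) by simp
    qed
  qed
  have near1: "\<exists>r\<in>P1. D1 X a lam Xs (vtx u) r \<le> 80"
  proof -
    obtain g where g: "\<forall>i\<le>G (x0, 0) (z, m). g i \<in> S \<and> G (x0, 0) (g i) = i \<and> G (g i) (z, m) = G (x0, 0) (z, m) - i \<and>
              (\<exists>r\<in>P1. \<forall>v\<in>S. D1 X a lam Xs (vtx v) r = real (G v (g i)))"
       "\<forall>i<G (x0, 0) (z, m). adj (g i) (g (Suc i))"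
      using geo_extract[OF g1 v0S zS] by blast
    have Gm: "G (x0, 0) (z, m) = m" using G_v0[OF zS] by simp
    have gm: "g m = (z, m)" using g(1)[rule_format, of m] Gm G_zero[OF _ zS] by simp
    define f where "f i = g (m - i)" for i
    have ch: "\<forall>i<m. adj (f i) (f (Suc i))"
    proof (intro allI impI)
      fix i assume i: "i < m"
      hence "adj (g (m - Suc i)) (g (Suc (m - Suc i)))" using g(2) Gm by simp
      moreover have "Suc (m - Suc i) = m - i" using i by simp
      ultimately show "adj (f i) (f (Suc i))" unfolding f_def using adj_sym by simp
    qed
    have fj: "f (m - nt) = g nt" unfolding f_def using mnt by simp
    have gnt: "g nt \<in> S" "G (x0, 0) (g nt) = nt" using g(1)[rule_format, of nt] Gm mnt by auto
    have lv: "snd (f (m - nt)) \<le> nt" using G_lev(1)[OF v0S gnt(1)] gnt(2) fj by simp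
    have "dist z zt \<le> dist z x + dist x zt" by (rule dist_triangle)
    hence d: "dist z zt < 3 / a ^ nt" using dxz ct(5) lt(1) by (simp add: dist_commute)
    have "G (zt, nt) (f (m - nt)) \<le> 7"
      by (rule vert_case[OF ch _ _ lv _ _ uS d]) (use gm mnt fj gnt in \<open>auto simp: f_def\<close>)
    moreover obtain r where "r \<in> P1" "\<forall>v\<in>S. D1 X a lam Xs (vtx v) r = real (G v (g nt))"
      using g(1)[rule_format, of nt] Gm mnt by auto
    ultimately show ?thesis using uS ct(1) fj by force
  qed
  have near3: "\<exists>r\<in>P3. D1 X a lam Xs (vtx u) r \<le> 80"
  proof -
    obtain g where g: "\<forall>i\<le>G (w, n) (x0, 0). g i \<in> S \<and> G (w, n) (g i) = i \<and> G (g i) (x0, 0) = G (w, n) (x0, 0) - i \<and>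
              (\<exists>r\<in>P3. \<forall>v\<in>S. D1 X a lam Xs (vtx v) r = real (G v (g i)))"
       "\<forall>i<G (w, n) (x0, 0). adj (g i) (g (Suc i))"
      using geo_extract[OF g3 wS v0S] by blast
    have Gn: "G (w, n) (x0, 0) = n" using G_v0[OF wS] by simp
    have "g 0 \<in> S" "G (w, n) (g 0) = 0" using g(1)[rule_format, of 0] by simp_all
    hence g0: "g 0 = (w, n)" using G_zero[OF wS] by metis
    have ch: "\<forall>i<n. adj (g i) (g (Suc i))" using g(2) Gn by simp
    have gnt: "g (n - nt) \<in> S" "G (g (n - nt)) (x0, 0) = nt" using g(1)[rule_format, of "n - nt"] Gn mnt by auto
    have lv: "snd (g (n - nt)) \<le> nt" using G_lev(2)[OF gnt(1) v0S] gnt(2) by simp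
    have "dist w zt \<le> dist w y + dist y zt" by (rule dist_triangle)
    hence d: "dist w zt < 3 / a ^ nt" using dyw ct(6) lt(2) by (simp add: dist_commute)
    have "G (zt, nt) (g (n - nt)) \<le> 7"
      by (rule vert_case[OF ch g0 _ lv _ _ uS d gnt(1)]) (use mnt in auto)
    moreover obtain r where "r \<in> P3" "\<forall>v\<in>S. D1 X a lam Xs (vtx v) r = real (G v (g (n - nt)))"
      using g(1)[rule_format, of "n - nt"] Gn by auto
    ultimately show ?thesis using uS ct(1) by force
  qed
  have near2: "\<exists>r\<in>P2. D1 X a lam Xs (vtx u) r \<le> 80"
    using mid_case[OF g2 zS wS uS dxz dyw hsum ct(4) ct(3) ct(5) mnt] ct(1) by simp
  show ?thesis unfolding approx_center_def
    using near1 near2 near3 inf_le g1 g2 g3 by blast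
qed

end

theorem lemma2p6:
  fixes X :: "'a::metric_space set" and Xs :: "nat \<Rightarrow> 'a set" and x0 x y z w :: 'a
    and a lam :: real and m n :: nat and u :: "'a hvert" and P1 P2 P3 :: "'a mgpoint set"
  assumes "compact X" and "diameter X = 1 / 2"
    and "filling_seq X a Xs x0"
    and "a \<ge> lam" and "lam \<ge> 2" and "lam \<ge> 1 + a / (a - 1)"
    and "x \<in> X" and "y \<in> X"
    and "(z, m) \<in> hfS Xs" and "(w, n) \<in> hfS Xs"
    and "x \<in> Bl X z (1 / a ^ m)" and "y \<in> Bl X w (1 / a ^ n)"
    and "1 / a ^ m + 1 / a ^ n < dist x y / a ^ 2"
    and "u \<in> ctr X a Xs x y"
    and "geodesic_seg X a lam Xs (vtx (x0, 0)) (vtx (z, m)) P1"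
    and "geodesic_seg X a lam Xs (vtx (z, m)) (vtx (w, n)) P2"
    and "geodesic_seg X a lam Xs (vtx (w, n)) (vtx (x0, 0)) P3"
  shows "approx_center X a lam Xs 80 (vtx u) P1 P2 P3"
proof -
  interpret hfl X a lam Xs x0 by unfold_locales (use assms(3-6) in auto)
  show ?thesis by (rule main[OF assms(7-17)])
qed

end
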